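(* Let $x=(B_1,B_2,i,j)\in\mathbf M_{V,W}$ and $x'=(B_1',B_2',i',j')\in\mathbf M_{V',W'}$ be such that $B_1$ and $B_1'$ have no common eigenvalue. If $x$ and $x'$ are both stable (resp. both costable), then $\mathsf T(x,x')$ is stable (resp. costable).
   Context: For vector spaces $V,W$, $\mathbf M_{V,W}=\mathrm{End}(V)^{\oplus2}\oplus\mathrm{Hom}(W,V)\oplus\mathrm{Hom}(V,W)$. A datum $(B_1,B_2,i,j)$ is stable if no proper subspace of $V$ containing $\mathrm{Im}(i)$ is invariant under $B_1,B_2$, and costable if no nonzero subspace of $\mathrm{Ker}(j)$ is invariant under $B_1,B_2$. Let $\widetilde V=V\otimes W'\oplus W\otimes V'$, $\widetilde W=W\otimes W'$. When $B_1,B_1'$ have no common eigenvalue, $\mathsf T(x,x')\in\mathbf M_{\widetilde V,\widetilde W}$ is $$\Bigl(\begin{pmatrix}B_1\otimes\mathrm{Id}_{W'}&0\\0&\mathrm{Id}_W\otimes B_1'\end{pmatrix},\begin{pmatrix}B_2\otimes\mathrm{Id}_{W'}&\widetilde B^{(1,2)}\\\widetilde B^{(2,1)}&\mathrm{Id}_W\otimes B_2'\end{pmatrix},\begin{pmatrix}i\otimes\mathrm{Id}_{W'}\\\mathrm{Id}_W\otimes i'\end{pmatrix},\begin{pmatrix}j\otimes\mathrm{Id}_{W'}&\mathrm{Id}_W\otimes j'\end{pmatrix}\Bigr),$$ where $\widetilde B^{(1,2)}\colon W\otimes V'\to V\otimes W'$ and $\widetilde B^{(2,1)}\colon V\otimes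 W'\to W\otimes V'$ are the unique solutions of $(B_1\otimes\mathrm{Id}_{W'})\widetilde B^{(1,2)}-\widetilde B^{(1,2)}(\mathrm{Id}_W\otimes B_1')+i\otimes j'=0$ and $(\mathrm{Id}_W\otimes B_1')\widetilde B^{(2,1)}-\widetilde B^{(2,1)}(B_1\otimes\mathrm{Id}_{W'})+j\otimes i'=0$. *)

theory Defs
  imports "Jordan_Normal_Form.Matrix" "Jordan_Normal_Form.Char_Poly"
begin

text \<open>Finite-dimensional complex vector spaces are represented in coordinates:
  V = complex^n etc.; linear maps are matrices (JNF), acting on column vectors.
  A datum x = (B1,B2,i,j) in M_{V,W} with dim V = n, dim W = w means
  B1, B2 are n x n, i is n x w (map W to V), j is w x n (map V to W).\<close>

definition csubspace :: "nat \<Rightarrow> complex vec set \<Rightarrow> bool" where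
  "csubspace n S \<longleftrightarrow> S \<subseteq> carrier_vec n \<and> 0\<^sub>v n \<in> S \<and>
     (\<forall>u\<in>S. \<forall>v\<in>S. u + v \<in> S) \<and> (\<forall>c. \<forall>u\<in>S. c \<cdot>\<^sub>v u \<in> S)"

definition invariant2 :: "complex mat \<Rightarrow> complex mat \<Rightarrow> complex vec set \<Rightarrow> bool" where
  "invariant2 B1 B2 S \<longleftrightarrow> (\<forall>v\<in>S. B1 *\<^sub>v v \<in> S \<and> B2 *\<^sub>v v \<in> S)"

text \<open>Stable: no proper subspace of V containing Im(i) is invariant under B1, B2.\<close>
definition stable :: "complex mat \<times> complex mat \<times> complex mat \<times> complex mat \<Rightarrow> bool" where
  "stable x = (case x of (B1, B2, i, j) \<Rightarrow>
     (\<forall>S. csubspace (dim_row B1) S \<and> (\<forall>u\<in>carrier_vec (dim_col i). i *\<^sub>v u \<in> S)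
          \<and> invariant2 B1 B2 S \<longrightarrow> S = carrier_vec (dim_row B1)))"

text \<open>Costable: no nonzero subspace of Ker(j) is invariant under B1, B2.\<close>
definition costable :: "complex mat \<times> complex mat \<times> complex mat \<times> complex mat \<Rightarrow> bool" where
  "costable x = (case x of (B1, B2, i, j) \<Rightarrow>
     (\<forall>S. csubspace (dim_row B1) S \<and> S \<subseteq> {v. j *\<^sub>v v = 0\<^sub>v (dim_row j)}
          \<and> invariant2 B1 B2 S \<longrightarrow> S = {0\<^sub>v (dim_row B1)}))"

text \<open>Kronecker (tensor) product of matrices; basis e_a \<otimes> f_b of a tensor product
  of spaces of dimensions n and m is ordered as index a * m + b.\<close>
definition kron :: "complex mat \<Rightarrow> complex mat \<Rightarrow> complex mat" where
  "kron A B = mat (dim_row A * dim_row B) (dim_col A * dim_col B)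
     (\<lambda>(p, q). A $$ (p div dim_row B, q div dim_col B) * B $$ (p mod dim_row B, q mod dim_col B))"

text \<open>Block column (A over C) and block row (A beside B).\<close>
definition vstack :: "complex mat \<Rightarrow> complex mat \<Rightarrow> complex mat" where
  "vstack A C = mat (dim_row A + dim_row C) (dim_col A)
     (\<lambda>(p, q). if p < dim_row A then A $$ (p, q) else C $$ (p - dim_row A, q))"

definition hstack :: "complex mat \<Rightarrow> complex mat \<Rightarrow> complex mat" where
  "hstack A B = mat (dim_row A) (dim_col A + dim_col B)
     (\<lambda>(p, q). if q < dim_col A then A $$ (p, q) else B $$ (p, q - dim_col A))"

text \<open>Data: x = (B1,B2,i,j) with dim V = n, dim W = w; x' with dim V' = n', dim W' = w'.
  V~ = V\<otimes>W' \<oplus> W\<otimes>V' (dimension n*w' + w*n'), W~ = W\<otimes>W' (dimension w*w').\<close>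

definition Bt12 :: "complex mat \<times> complex mat \<times> complex mat \<times> complex mat \<Rightarrow>
    complex mat \<times> complex mat \<times> complex mat \<times> complex mat \<Rightarrow> complex mat" where
  "Bt12 x x' = (case x of (B1, B2, i, j) \<Rightarrow> case x' of (B1', B2', i', j') \<Rightarrow>
     let n = dim_row B1; w = dim_col i; n' = dim_row B1'; w' = dim_col i' in
     (THE X. X \<in> carrier_mat (n * w') (w * n') \<and>
        kron B1 (1\<^sub>m w') * X - X * kron (1\<^sub>m w) B1' + kron i j' = 0\<^sub>m (n * w') (w * n')))"

definition Bt21 :: "complex mat \<times> complex mat \<times> complex mat \<times> complex mat \<Rightarrow>
    complex mat \<times> complex mat \<times> complex mat \<times> complex mat \<Rightarrow> complex mat" where
  "Bt21 x x' = (case x of (B1, B2, i, j) \<Rightarrow> case x' of (B1', B2', i', j') \<Rightarrow>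
     let n = dim_row B1; w = dim_col i; n' = dim_row B1'; w' = dim_col i' in
     (THE X. X \<in> carrier_mat (w * n') (n * w') \<and>
        kron (1\<^sub>m w) B1' * X - X * kron B1 (1\<^sub>m w') + kron j i' = 0\<^sub>m (w * n') (n * w')))"

definition Tmap :: "complex mat \<times> complex mat \<times> complex mat \<times> complex mat \<Rightarrow>
    complex mat \<times> complex mat \<times> complex mat \<times> complex mat \<Rightarrow>
    complex mat \<times> complex mat \<times> complex mat \<times> complex mat" where
  "Tmap x x' = (case x of (B1, B2, i, j) \<Rightarrow> case x' of (B1', B2', i', j') \<Rightarrow>
     let n = dim_row B1; w = dim_col i; n' = dim_row B1'; w' = dim_col i' in
     (four_block_mat (kron B1 (1\<^sub>m w')) (0\<^sub>m (n * w') (w * n'))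
                     (0\<^sub>m (w * n') (n * w')) (kron (1\<^sub>m w) B1'),
      four_block_mat (kron B2 (1\<^sub>m w')) (Bt12 x x') (Bt21 x x') (kron (1\<^sub>m w) B2'),
      vstack (kron i (1\<^sub>m w')) (kron (1\<^sub>m w) i'),
      hstack (kron j (1\<^sub>m w')) (kron (1\<^sub>m w) j')))"

end

theory Submission
  imports Defs "HOL-Computational_Algebra.Fundamental_Theorem_Algebra" "HOL-Computational_Algebra.Polynomial_Factorial" "HOL-Computational_Algebra.Euclidean_Algorithm" "HOL-Computational_Algebra.Field_as_Ring"
begin
definition pw :: "complex mat \<Rightarrow> nat \<Rightarrow> complex vec \<Rightarrow> complex vec" where
  "pw A k v = ((\<lambda>u. A *\<^sub>v u) ^^ k) v"

lemma pw_0[simp]: "pw A 0 v = v" by (simp add: pw_def)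
lemma pw_Suc[simp]: "pw A (Suc k) v = A *\<^sub>v pw A k v" by (simp add: pw_def)
lemma pw_carrier[simp]: "A \<in> carrier_mat N N \<Longrightarrow> v \<in> carrier_vec N \<Longrightarrow> pw A k v \<in> carrier_vec N"
  by (induct k) auto

definition mev :: "complex mat \<Rightarrow> complex poly \<Rightarrow> complex vec \<Rightarrow> complex vec" where
  "mev A p v = vec (dim_row A) (\<lambda>r. \<Sum>k<Suc (degree p). coeff p k * (pw A k v) $ r)"

lemma mev_bound: assumes "degree p < m"
  shows "mev A p v = vec (dim_row A) (\<lambda>r. \<Sum>k<m. coeff p k * (pw A k v) $ r)"
proof -
  have "(\<Sum>k<Suc (degree p). coeff p k * pw A k v $ r) = (\<Sum>k<m. coeff p k * pw A k v $ r)" for r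
    by (rule sum.mono_neutral_left, insert assms, auto simp: coeff_eq_0)
  thus ?thesis unfolding mev_def by simp
qed

lemma mev_carrier[simp]: "A \<in> carrier_mat N N \<Longrightarrow> mev A p v \<in> carrier_vec N"
  unfolding mev_def by auto

lemma mev_add: assumes "A \<in> carrier_mat N N"
  shows "mev A (p + q) v = mev A p v + mev A q v"
proof -
  let ?m = "Suc (max (degree p) (degree q))"
  have d: "degree (p+q) < ?m" using degree_add_le_max[of p q] by auto
  have dp: "degree p < ?m" and dq: "degree q < ?m" by auto
  show ?thesis
    unfolding mev_bound[OF d] mev_bound[OF dp] mev_bound[OF dq]
    by (rule eq_vecI, auto simp del: sum.lessThan_Suc simp: sum.distrib distrib_right)
qed

lemma mev_smult: "mev A (Polynomial.smult c p) v = c \<cdot>\<^sub>v mev A p v"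
proof -
  have d: "degree (Polynomial.smult c p) < Suc (degree p)" by auto
  show ?thesis unfolding mev_bound[OF d] mev_def
    by (rule eq_vecI, auto simp del: sum.lessThan_Suc simp: sum_distrib_left mult.assoc)
qed

lemma mev_0[simp]: "mev A 0 v = 0\<^sub>v (dim_row A)"
  unfolding mev_def by (rule eq_vecI, auto)

lemma mev_pCons: assumes A: "A \<in> carrier_mat N N" and v: "v \<in> carrier_vec N"
  shows "mev A (pCons a p) v = a \<cdot>\<^sub>v v + A *\<^sub>v mev A p v"
proof -
  let ?m = "Suc (degree p)"
  have d: "degree (pCons a p) < Suc ?m" by (auto simp: degree_pCons_le le_less_trans)
  show ?thesis
  proof (rule eq_vecI)
    fix r assume "r < dim_vec (a \<cdot>\<^sub>v v + A *\<^sub>v mev A p v)"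
    hence r: "r < N" using A by auto
    have "mev A (pCons a p) v $ r = (\<Sum>k<Suc ?m. coeff (pCons a p) k * pw A k v $ r)"
      unfolding mev_bound[OF d] using A r by auto
    also have "\<dots> = a * v $ r + (\<Sum>k<?m. coeff p k * pw A (Suc k) v $ r)"
      by (subst sum.lessThan_Suc_shift, simp)
    also have "(\<Sum>k<?m. coeff p k * pw A (Suc k) v $ r)
       = (\<Sum>k<?m. coeff p k * (\<Sum>c<N. A $$ (r,c) * pw A k v $ c))"
      using A r v by (auto simp del: sum.lessThan_Suc simp: scalar_prod_def atLeast0LessThan intro!: sum.cong)
    also have "\<dots> = (\<Sum>c<N. A $$ (r,c) * (\<Sum>k<?m. coeff p k * pw A k v $ c))"
      by (simp del: sum.lessThan_Suc add: sum_distrib_left mult_ac sum.swap[of _ "{..<N}"])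
    also have "\<dots> = (A *\<^sub>v mev A p v) $ r"
      using A r by (auto simp del: sum.lessThan_Suc simp: scalar_prod_def mev_def atLeast0LessThan intro!: sum.cong)
    finally show "mev A (pCons a p) v $ r = (a \<cdot>\<^sub>v v + A *\<^sub>v mev A p v) $ r"
      using A r v by auto
  qed (insert A v, auto simp: mev_def)
qed

lemma mev_mult: assumes A: "A \<in> carrier_mat N N" and v: "v \<in> carrier_vec N"
  shows "mev A (p * q) v = mev A p (mev A q v)"
proof (induct p rule: pCons_induct)
  case 0
  then show ?case using A by simp
next
  case (pCons a p)
  have w: "mev A q v \<in> carrier_vec N" using A by simp
  have "mev A (pCons a p * q) v = mev A (Polynomial.smult a q + pCons 0 (p * q)) v"
    by simp
  also have "\<dots> = a \<cdot>\<^sub>v mev A q v + (0 \<cdot>\<^sub>v v + A *\<^sub>v mev A (p*q) v)"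
    unfolding mev_add[OF A] mev_smult mev_pCons[OF A v] ..
  also have "\<dots> = a \<cdot>\<^sub>v mev A q v + A *\<^sub>v mev A p (mev A q v)"
    using pCons(2) A v by auto
  also have "\<dots> = mev A (pCons a p) (mev A q v)"
    unfolding mev_pCons[OF A w] ..
  finally show ?case .
qed

lemma mat_vec_zero[simp]: "A \<in> carrier_mat r N \<Longrightarrow> A *\<^sub>v 0\<^sub>v N = 0\<^sub>v r"
  by (rule eq_vecI, auto simp: scalar_prod_def)

lemma mev_one: assumes A: "A \<in> carrier_mat N N" and v: "v \<in> carrier_vec N"
  shows "mev A 1 v = v"
  using mev_pCons[OF A v, of 1 0] A v by (simp add: one_pCons)

lemma mev_zero_vec: assumes A: "A \<in> carrier_mat N N"
  shows "mev A p (0\<^sub>v N) = 0\<^sub>v N"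
proof (induct p rule: pCons_induct)
  case (pCons a p)
  have "a \<cdot>\<^sub>v 0\<^sub>v N = (0\<^sub>v N :: complex vec)" by (rule eq_vecI, auto)
  then show ?case using mev_pCons[OF A, of "0\<^sub>v N" a p] A pCons by simp
qed (insert A, simp)

lemma mev_inv: assumes A: "A \<in> carrier_mat N N" and S: "S \<subseteq> carrier_vec N"
  and z: "0\<^sub>v N \<in> S" and add: "\<And>u v. u \<in> S \<Longrightarrow> v \<in> S \<Longrightarrow> u + v \<in> S"
  and sm: "\<And>c u. u \<in> S \<Longrightarrow> c \<cdot>\<^sub>v u \<in> S"
  and inv: "\<And>u. u \<in> S \<Longrightarrow> A *\<^sub>v u \<in> S"
  and s: "s \<in> S"
  shows "mev A p s \<in> S"
proof (induct p rule: pCons_induct)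
  case 0
  then show ?case using A z by simp
next
  case (pCons a p)
  have "s \<in> carrier_vec N" using s S by auto
  then show ?case unfolding mev_pCons[OF A \<open>s \<in> carrier_vec N\<close>]
    using pCons add sm inv s by auto
qed

lemma smult_append_vec: "c \<cdot>\<^sub>v (a @\<^sub>v b) = (c \<cdot>\<^sub>v a) @\<^sub>v (c \<cdot>\<^sub>v b)"
  by (rule eq_vecI, auto)

lemma mev_block: assumes A: "A \<in> carrier_mat N1 N1" and D: "D \<in> carrier_mat N2 N2"
  and a: "a \<in> carrier_vec N1" and b: "b \<in> carrier_vec N2"
  shows "mev (four_block_mat A (0\<^sub>m N1 N2) (0\<^sub>m N2 N1) D) p (a @\<^sub>v b) = mev A p a @\<^sub>v mev D p b"
proof (induct p rule: pCons_induct)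
  case 0
  then show ?case using A D by (auto intro!: eq_vecI)
next
  case (pCons c p)
  let ?M = "four_block_mat A (0\<^sub>m N1 N2) (0\<^sub>m N2 N1) D"
  have M: "?M \<in> carrier_mat (N1+N2) (N1+N2)" using A D by auto
  have ab: "a @\<^sub>v b \<in> carrier_vec (N1+N2)" using a b by auto
  show ?case unfolding mev_pCons[OF M ab] mev_pCons[OF A a] mev_pCons[OF D b] pCons
    by (subst mult_mat_vec_split[OF A D], insert A D a b, auto simp: smult_append_vec append_vec_add)
qed

lemma ann_exists: assumes A: "A \<in> carrier_mat N N" and v: "v \<in> carrier_vec N"
  shows "\<exists>q. q \<noteq> 0 \<and> mev A q v = 0\<^sub>v N"
proof -
  define c where "c = (\<lambda>r. vec (Suc N) (\<lambda>k. if r < N then pw A k v $ r else 0))"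
  define K where "K = mat\<^sub>r (Suc N) (Suc N) (\<lambda>r. if r = N then 0\<^sub>v (Suc N) else c r)"
  have K: "K \<in> carrier_mat (Suc N) (Suc N)" unfolding K_def by auto
  have "det K = 0" unfolding K_def by (rule det_row_0, auto simp: c_def)
  then obtain x where x: "x \<in> carrier_vec (Suc N)" "x \<noteq> 0\<^sub>v (Suc N)" "K *\<^sub>v x = 0\<^sub>v (Suc N)"
    using det_0_iff_vec_prod_zero[OF K] by auto
  define q where "q = Poly (list_of_vec x)"
  have cq: "coeff q k = (if k < Suc N then x $ k else 0)" for k
    unfolding q_def using x(1) by (auto simp: nth_default_def)
  have dq: "degree q < Suc (Suc N)" unfolding q_def using degree_Poly[of "list_of_vec x"] x(1) by auto
  have "q \<noteq> 0"
  proof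
    assume "q = 0"
    hence "x $ k = 0" if "k < Suc N" for k using cq[of k] that by auto
    hence "x = 0\<^sub>v (Suc N)" using x(1) by (auto intro!: eq_vecI)
    thus False using x by auto
  qed
  moreover have "mev A q v = 0\<^sub>v N"
  proof (rule eq_vecI)
    fix r assume "r < dim_vec (0\<^sub>v N :: complex vec)"
    hence r: "r < N" by auto
    have "mev A q v $ r = (\<Sum>k<Suc (Suc N). coeff q k * pw A k v $ r)"
      unfolding mev_bound[OF dq] using A r by auto
    also have "\<dots> = (\<Sum>k<Suc N. x $ k * pw A k v $ r)"
      by (simp add: cq)
    also have "\<dots> = (K *\<^sub>v x) $ r"
      using r x(1) K by (auto simp: K_def c_def scalar_prod_def atLeast0LessThan mult.commute intro!: sum.cong)
    also have "\<dots> = 0" using x r by auto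
    finally show "mev A q v $ r = 0\<^sub>v N $ r" using r by auto
  qed (insert A, auto)
  ultimately show ?thesis by auto
qed

lemma ann_good: assumes A: "A \<in> carrier_mat N N" and v: "v \<in> carrier_vec N"
  shows "\<exists>q. q \<noteq> 0 \<and> mev A q v = 0\<^sub>v N \<and> (\<forall>\<mu>. poly q \<mu> = 0 \<longrightarrow> eigenvalue A \<mu>)"
proof -
  from ann_exists[OF A v] obtain q0 where "q0 \<noteq> 0 \<and> mev A q0 v = 0\<^sub>v N" by auto
  from ex_has_least_nat[of "\<lambda>q. q \<noteq> 0 \<and> mev A q v = 0\<^sub>v N", OF this, of degree]
  obtain q where q: "q \<noteq> 0" "mev A q v = 0\<^sub>v N"
    and min: "\<And>q'. q' \<noteq> 0 \<and> mev A q' v = 0\<^sub>v N \<Longrightarrow> degree q \<le> degree q'" by blast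
  have "eigenvalue A \<mu>" if root: "poly q \<mu> = 0" for \<mu>
  proof -
    from root obtain r where qr: "q = [:-\<mu>,1:] * r" unfolding poly_eq_0_iff_dvd by (auto elim: dvdE)
    have r0: "r \<noteq> 0" using q(1) qr by auto
    have "degree q = Suc (degree r)" unfolding qr using r0 by (subst degree_mult_eq, auto)
    hence "\<not> (r \<noteq> 0 \<and> mev A r v = 0\<^sub>v N)" using min[of r] by auto
    hence w0: "mev A r v \<noteq> 0\<^sub>v N" using r0 by auto
    define w where "w = mev A r v"
    have w: "w \<in> carrier_vec N" unfolding w_def using A by auto
    have "0\<^sub>v N = mev A [:-\<mu>,1:] w" using q(2) unfolding qr mev_mult[OF A v] w_def by simp
    also have "\<dots> = (-\<mu>) \<cdot>\<^sub>v w + A *\<^sub>v (1 \<cdot>\<^sub>v w + A *\<^sub>v mev A 0 w)"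
      unfolding mev_pCons[OF A w] ..
    also have "\<dots> = (-\<mu>) \<cdot>\<^sub>v w + A *\<^sub>v w" using A w by auto
    finally have eq: "(-\<mu>) \<cdot>\<^sub>v w + A *\<^sub>v w = 0\<^sub>v N" by simp
    have "A *\<^sub>v w = \<mu> \<cdot>\<^sub>v w"
    proof (rule eq_vecI)
      fix i assume "i < dim_vec (\<mu> \<cdot>\<^sub>v w)"
      hence i: "i < N" using w by auto
      have "((-\<mu>) \<cdot>\<^sub>v w + A *\<^sub>v w) $ i = 0" using eq i by auto
      thus "(A *\<^sub>v w) $ i = (\<mu> \<cdot>\<^sub>v w) $ i" using i w A by auto
    qed (insert A w, auto)
    thus ?thesis unfolding eigenvalue_def eigenvector_def using A w w0 w_def by (intro exI[of _ w]) auto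
  qed
  thus ?thesis using q by auto
qed

lemma coprime_from_roots: fixes p q :: "complex poly"
  assumes "p \<noteq> 0" "q \<noteq> 0" and "\<And>z. poly p z = 0 \<Longrightarrow> poly q z = 0 \<Longrightarrow> False"
  shows "coprime p q"
proof (rule coprimeI)
  fix d assume dp: "d dvd p" and dq: "d dvd q"
  have d0: "d \<noteq> 0" using dp assms(1) by auto
  show "is_unit d"
  proof (rule ccontr)
    assume "\<not> is_unit d"
    hence "degree d \<noteq> 0" using d0 by (auto simp: is_unit_iff_degree)
    hence "\<not> constant (poly d)" by (simp add: constant_degree)
    then obtain z where "poly d z = 0" using fundamental_theorem_of_algebra by blast
    hence "poly p z = 0" "poly q z = 0" using dp dq by (auto elim!: dvdE)
    thus False using assms(3) by auto
  qed
qed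

lemma split_block: fixes A D :: "complex mat" assumes A: "A \<in> carrier_mat N1 N1" and D: "D \<in> carrier_mat N2 N2"
  and noeig: "\<And>c. eigenvalue A c \<Longrightarrow> eigenvalue D c \<Longrightarrow> False"
  and S: "S \<subseteq> carrier_vec (N1+N2)"
  and z: "0\<^sub>v (N1+N2) \<in> S" and add: "\<And>u v. u \<in> S \<Longrightarrow> v \<in> S \<Longrightarrow> u + v \<in> S"
  and sm: "\<And>c u. u \<in> S \<Longrightarrow> c \<cdot>\<^sub>v u \<in> S"
  and inv: "\<And>u. u \<in> S \<Longrightarrow> four_block_mat A (0\<^sub>m N1 N2) (0\<^sub>m N2 N1) D *\<^sub>v u \<in> S"
  and a: "a \<in> carrier_vec N1" and b: "b \<in> carrier_vec N2" and s: "a @\<^sub>v b \<in> S"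
  shows "a @\<^sub>v 0\<^sub>v N2 \<in> S \<and> 0\<^sub>v N1 @\<^sub>v b \<in> S"
proof -
  let ?M = "four_block_mat A (0\<^sub>m N1 N2) (0\<^sub>m N2 N1) D"
  have M: "?M \<in> carrier_mat (N1+N2) (N1+N2)" using A D by auto
  obtain p where p: "p \<noteq> 0" "mev A p a = 0\<^sub>v N1" "\<And>\<mu>. poly p \<mu> = 0 \<Longrightarrow> eigenvalue A \<mu>"
    using ann_good[OF A a] by auto
  obtain q where q: "q \<noteq> 0" "mev D q b = 0\<^sub>v N2" "\<And>\<mu>. poly q \<mu> = 0 \<Longrightarrow> eigenvalue D \<mu>"
    using ann_good[OF D b] by auto
  have "coprime p q" by (rule coprime_from_roots[OF p(1) q(1)], insert p(3) q(3) noeig, blast)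
  hence g: "gcd p q = 1" by (simp add: coprime_iff_gcd_eq_1)
  define u where "u = fst (bezout_coefficients p q)"
  define v where "v = snd (bezout_coefficients p q)"
  have uv: "u * p + v * q = 1" using bezout_coefficients_fst_snd[of p q] g unfolding u_def v_def by simp
  have gen: "mev A (f1 * p) a + mev A (f2 * q) a = a \<and> mev D (f1 * p) b + mev D (f2 * q) b = b \<and>
     mev A (f1 * p) a = 0\<^sub>v N1 \<and> mev D (f2 * q) b = 0\<^sub>v N2" if "f1 * p + f2 * q = 1" for f1 f2
  proof -
    have "mev A (f1 * p) a + mev A (f2 * q) a = a"
      using mev_add[OF A, of "f1*p" "f2*q" a, symmetric] that mev_one[OF A a] by simp
    moreover have "mev D (f1 * p) b + mev D (f2 * q) b = b"
      using mev_add[OF D, of "f1*p" "f2*q" b, symmetric] that mev_one[OF D b] by simp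
    moreover have "mev A (f1 * p) a = 0\<^sub>v N1" unfolding mev_mult[OF A a] p(2) mev_zero_vec[OF A] ..
    moreover have "mev D (f2 * q) b = 0\<^sub>v N2" unfolding mev_mult[OF D b] q(2) mev_zero_vec[OF D] ..
    ultimately show ?thesis by blast
  qed
  from gen[OF uv] have e1: "mev A (v*q) a = a" "mev D (v*q) b = 0\<^sub>v N2"
    and e2: "mev A (u*p) a = 0\<^sub>v N1" "mev D (u*p) b = b"
    using A D a b by auto
  have "mev ?M (v*q) (a @\<^sub>v b) \<in> S" by (rule mev_inv[OF M S z add sm inv s])
  moreover have "mev ?M (u*p) (a @\<^sub>v b) \<in> S" by (rule mev_inv[OF M S z add sm inv s])
  ultimately show ?thesis unfolding mev_block[OF A D a b] e1 e2 by auto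
qed

lemma sum_prod_idx: fixes c m :: nat and f :: "nat \<Rightarrow> 'a :: comm_monoid_add" shows "(\<Sum>q<c*m. f q) = (\<Sum>a<c. \<Sum>b<m. f (a*m+b)) "
proof -
  have "sum f {a*m..<a*m+m} = (\<Sum>b<m. f (a*m+b))" for a
    using sum.shift_bounds_nat_ivl[of f 0 "a*m" m] by (simp add: add.commute lessThan_atLeast0)
  thus ?thesis using sum.nat_group[of f m c] by simp
qed

definition sl1 :: "nat \<Rightarrow> nat \<Rightarrow> nat \<Rightarrow> complex vec \<Rightarrow> complex vec" where
  "sl1 m r b v = vec r (\<lambda>q. v $ (q*m + b))"
definition sl2 :: "nat \<Rightarrow> nat \<Rightarrow> complex vec \<Rightarrow> complex vec" where
  "sl2 c k v = vec c (\<lambda>d. v $ (k*c + d))"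
definition E1 :: "nat \<Rightarrow> nat \<Rightarrow> nat \<Rightarrow> complex vec \<Rightarrow> complex vec" where
  "E1 m r b u = vec (r*m) (\<lambda>p. if p mod m = b then u $ (p div m) else 0)"
definition E2 :: "nat \<Rightarrow> nat \<Rightarrow> nat \<Rightarrow> complex vec \<Rightarrow> complex vec" where
  "E2 m c k u = vec (m*c) (\<lambda>p. if p div c = k then u $ (p mod c) else 0)"

lemma sl1_carrier[simp]: "sl1 m r b v \<in> carrier_vec r" unfolding sl1_def by auto
lemma sl2_carrier[simp]: "sl2 c k v \<in> carrier_vec c" unfolding sl2_def by auto
lemma E1_carrier[simp]: "E1 m r b u \<in> carrier_vec (r*m)" unfolding E1_def by auto
lemma E2_carrier[simp]: "E2 m c k u \<in> carrier_vec (m*c)" unfolding E2_def by auto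

lemma kron_carrier[simp]: "kron X Y \<in> carrier_mat (dim_row X * dim_row Y) (dim_col X * dim_col Y)"
  unfolding kron_def by auto

lemma kron_index: "p < dim_row X * dim_row Y \<Longrightarrow> q < dim_col X * dim_col Y \<Longrightarrow>
  kron X Y $$ (p,q) = X $$ (p div dim_row Y, q div dim_col Y) * Y $$ (p mod dim_row Y, q mod dim_col Y)"
  unfolding kron_def by auto

lemma mat_vec_index_sum: "A \<in> carrier_mat r c \<Longrightarrow> v \<in> carrier_vec c \<Longrightarrow> p < r \<Longrightarrow>
  (A *\<^sub>v v) $ p = (\<Sum>q<c. A $$ (p,q) * v $ q)"
  by (auto simp: scalar_prod_def atLeast0LessThan mult.commute intro!: sum.cong)

lemma idx_lt: fixes q r b m :: nat assumes "q < r" "b < m" shows "q*m+b < r*m"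
proof -
  have "q*m+b < (q+1)*m" using assms by simp
  also have "\<dots> \<le> r*m" using assms by (intro mult_right_mono) auto
  finally show ?thesis .
qed

lemma K1: assumes X: "X \<in> carrier_mat r c" and v: "v \<in> carrier_vec (c*m)" and b: "b < m"
  shows "sl1 m r b (kron X (1\<^sub>m m) *\<^sub>v v) = X *\<^sub>v sl1 m c b v"
proof (rule eq_vecI)
  fix q assume "q < dim_vec (X *\<^sub>v sl1 m c b v)"
  hence q: "q < r" using X by auto
  have m0: "m > 0" using b by auto
  have qm: "q*m+b < r*m" using idx_lt[OF q b] .
  have K: "kron X (1\<^sub>m m) \<in> carrier_mat (r*m) (c*m)" using kron_carrier[of X "1\<^sub>m m"] X by auto
  have "(kron X (1\<^sub>m m) *\<^sub>v v) $ (q*m+b) = (\<Sum>p<c*m. kron X (1\<^sub>m m) $$ (q*m+b,p) * v $ p)"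
    by (rule mat_vec_index_sum[OF K v qm])
  also have "\<dots> = (\<Sum>a<c. \<Sum>e<m. kron X (1\<^sub>m m) $$ (q*m+b,a*m+e) * v $ (a*m+e))"
    by (rule sum_prod_idx)
  also have "\<dots> = (\<Sum>a<c. \<Sum>e<m. (if e = b then X $$ (q,a) * v $ (a*m+b) else 0))"
  proof (rule sum.cong[OF refl], rule sum.cong[OF refl])
    fix a e assume a: "a \<in> {..<c}" and e: "e \<in> {..<m}"
    have am: "a*m+e < c*m" using idx_lt[of a c e m] a e by auto
    show "kron X (1\<^sub>m m) $$ (q*m+b,a*m+e) * v $ (a*m+e) = (if e = b then X $$ (q,a) * v $ (a*m+b) else 0)"
      using kron_index[of "q*m+b" X "1\<^sub>m m" "a*m+e"] qm am X b e by auto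
  qed
  also have "\<dots> = (\<Sum>a<c. X $$ (q,a) * v $ (a*m+b))" using b by simp
  also have "\<dots> = (X *\<^sub>v sl1 m c b v) $ q" by (subst mat_vec_index_sum[OF X _ q], auto simp: sl1_def)
  finally show "sl1 m r b (kron X (1\<^sub>m m) *\<^sub>v v) $ q = (X *\<^sub>v sl1 m c b v) $ q"
    using q by (simp add: sl1_def)
qed (insert X, auto simp: sl1_def)

lemma K2: assumes Y: "Y \<in> carrier_mat r c" and v: "v \<in> carrier_vec (m*c)" and k: "k < m"
  shows "sl2 r k (kron (1\<^sub>m m) Y *\<^sub>v v) = Y *\<^sub>v sl2 c k v"
proof (rule eq_vecI)
  fix d assume "d < dim_vec (Y *\<^sub>v sl2 c k v)"
  hence d: "d < r" using Y by auto
  have km: "k*r+d < m*r" using idx_lt[OF k d] .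
  have K: "kron (1\<^sub>m m) Y \<in> carrier_mat (m*r) (m*c)" using kron_carrier[of "1\<^sub>m m" Y] Y by auto
  have "(kron (1\<^sub>m m) Y *\<^sub>v v) $ (k*r+d) = (\<Sum>p<m*c. kron (1\<^sub>m m) Y $$ (k*r+d,p) * v $ p)"
    by (rule mat_vec_index_sum[OF K v km])
  also have "\<dots> = (\<Sum>a<m. \<Sum>e<c. kron (1\<^sub>m m) Y $$ (k*r+d,a*c+e) * v $ (a*c+e))"
    by (rule sum_prod_idx)
  also have "\<dots> = (\<Sum>a<m. if a = k then (\<Sum>e<c. Y $$ (d,e) * v $ (k*c+e)) else 0)"
  proof (rule sum.cong[OF refl])
    fix a assume a: "a \<in> {..<m}"
    show "(\<Sum>e<c. kron (1\<^sub>m m) Y $$ (k*r+d,a*c+e) * v $ (a*c+e)) = (if a = k then (\<Sum>e<c. Y $$ (d,e) * v $ (k*c+e)) else 0)"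
    proof (cases "a = k")
      case True
      show ?thesis
      proof (simp add: True, rule sum.cong[OF refl])
        fix e assume e: "e \<in> {..<c}"
        have am: "a*c+e < m*c" using idx_lt[of a m e c] a e by auto
        show "kron (1\<^sub>m m) Y $$ (k*r+d,k*c+e) * v $ (k*c+e) = Y $$ (d,e) * v $ (k*c+e)"
          using kron_index[of "k*r+d" "1\<^sub>m m" Y "k*c+e"] km am Y d e k True by auto
      qed
    next
      case False
      show ?thesis
      proof (simp add: False, rule sum.neutral, rule ballI)
        fix e assume e: "e \<in> {..<c}"
        have am: "a*c+e < m*c" using idx_lt[of a m e c] a e by auto
        show "kron (1\<^sub>m m) Y $$ (k*r+d,a*c+e) * v $ (a*c+e) = 0"
          using kron_index[of "k*r+d" "1\<^sub>m m" Y "a*c+e"] km am Y d e k a False by auto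
      qed
    qed
  qed
  also have "\<dots> = (\<Sum>e<c. Y $$ (d,e) * v $ (k*c+e))" using k by simp
  also have "\<dots> = (Y *\<^sub>v sl2 c k v) $ d" by (subst mat_vec_index_sum[OF Y _ d], auto simp: sl2_def)
  finally show "sl2 r k (kron (1\<^sub>m m) Y *\<^sub>v v) $ d = (Y *\<^sub>v sl2 c k v) $ d"
    using d by (simp add: sl2_def)
qed (insert Y, auto simp: sl2_def)

lemma ext1: assumes v: "v \<in> carrier_vec (r*m)" and v': "v' \<in> carrier_vec (r*m)"
  and eq: "\<And>b. b < m \<Longrightarrow> sl1 m r b v = sl1 m r b v'"
  shows "v = v'"
proof (rule eq_vecI)
  fix p assume "p < dim_vec v'"
  hence p: "p < r*m" using v' by auto
  hence m0: "m > 0" by (cases m, auto)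
  have q: "p div m < r" using p by (simp add: less_mult_imp_div_less)
  have b: "p mod m < m" using m0 by auto
  have "sl1 m r (p mod m) v $ (p div m) = sl1 m r (p mod m) v' $ (p div m)" using eq[OF b] by simp
  thus "v $ p = v' $ p" using q by (simp add: sl1_def)
qed (insert v v', auto)

lemma ext2: assumes v: "v \<in> carrier_vec (m*c)" and v': "v' \<in> carrier_vec (m*c)"
  and eq: "\<And>k. k < m \<Longrightarrow> sl2 c k v = sl2 c k v'"
  shows "v = v'"
proof (rule eq_vecI)
  fix p assume "p < dim_vec v'"
  hence p: "p < m*c" using v' by auto
  hence c0: "c > 0" by (cases c, auto)
  have q: "p div c < m" using p by (simp add: less_mult_imp_div_less mult.commute)
  have b: "p mod c < c" using c0 by auto
  have "sl2 c (p div c) v $ (p mod c) = sl2 c (p div c) v' $ (p mod c)" using eq[OF q] by simp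
  thus "v $ p = v' $ p" using b by (simp add: sl2_def mult.commute)
qed (insert v v', auto)

lemma sl1_E1: assumes "b < m" "b' < m" "u \<in> carrier_vec r"
  shows "sl1 m r b' (E1 m r b u) = (if b' = b then u else 0\<^sub>v r)"
  by (rule eq_vecI, insert assms idx_lt[of _ r b' m], auto simp: sl1_def E1_def)

lemma sl2_E2: assumes "k < m" "k' < m" "u \<in> carrier_vec c"
  shows "sl2 c k' (E2 m c k u) = (if k' = k then u else 0\<^sub>v c)"
  by (rule eq_vecI, insert assms idx_lt[of k' m _ c], auto simp: sl2_def E2_def)

lemma sl1_add: "v \<in> carrier_vec (r*m) \<Longrightarrow> v' \<in> carrier_vec (r*m) \<Longrightarrow> b < m \<Longrightarrow>
  sl1 m r b (v + v') = sl1 m r b v + sl1 m r b v'"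
  by (rule eq_vecI, insert idx_lt[of _ r b m], auto simp: sl1_def)
lemma sl1_smult: "v \<in> carrier_vec (r*m) \<Longrightarrow> b < m \<Longrightarrow> sl1 m r b (a \<cdot>\<^sub>v v) = a \<cdot>\<^sub>v sl1 m r b v"
  by (rule eq_vecI, insert idx_lt[of _ r b m], auto simp: sl1_def)
lemma sl1_zero: "b < m \<Longrightarrow> sl1 m r b (0\<^sub>v (r*m)) = 0\<^sub>v r"
  by (rule eq_vecI, insert idx_lt[of _ r b m], auto simp: sl1_def)
lemma sl2_add: "v \<in> carrier_vec (m*c) \<Longrightarrow> v' \<in> carrier_vec (m*c) \<Longrightarrow> k < m \<Longrightarrow>
  sl2 c k (v + v') = sl2 c k v + sl2 c k v'"
  by (rule eq_vecI, insert idx_lt[of k m _ c], auto simp: sl2_def)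
lemma sl2_smult: "v \<in> carrier_vec (m*c) \<Longrightarrow> k < m \<Longrightarrow> sl2 c k (a \<cdot>\<^sub>v v) = a \<cdot>\<^sub>v sl2 c k v"
  by (rule eq_vecI, insert idx_lt[of k m _ c], auto simp: sl2_def)
lemma sl2_zero: "k < m \<Longrightarrow> sl2 c k (0\<^sub>v (m*c)) = 0\<^sub>v c"
  by (rule eq_vecI, insert idx_lt[of k m _ c], auto simp: sl2_def)

lemma unit_E1: assumes p: "p < r*m"
  shows "unit_vec (r*m) p = E1 m r (p mod m) (unit_vec r (p div m))"
proof (rule eq_vecI)
  fix p' assume "p' < dim_vec (E1 m r (p mod m) (unit_vec r (p div m)))"
  hence p': "p' < r*m" by (simp add: E1_def)
  have q: "p' div m < r" using p' by (simp add: less_mult_imp_div_less)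
  have "(p' = p) = (p' mod m = p mod m \<and> p' div m = p div m)"
    by (metis div_mult_mod_eq)
  thus "unit_vec (r*m) p $ p' = E1 m r (p mod m) (unit_vec r (p div m)) $ p'"
    using p p' q by (auto simp: E1_def unit_vec_def)
qed (simp add: E1_def)

lemma unit_E2: assumes p: "p < m*c"
  shows "unit_vec (m*c) p = E2 m c (p div c) (unit_vec c (p mod c))"
proof (rule eq_vecI)
  fix p' assume "p' < dim_vec (E2 m c (p div c) (unit_vec c (p mod c)))"
  hence p': "p' < m*c" by (simp add: E2_def)
  hence c0: "c > 0" by (cases c, auto)
  have "(p' = p) = (p' mod c = p mod c \<and> p' div c = p div c)"
    by (metis div_mult_mod_eq)
  thus "unit_vec (m*c) p $ p' = E2 m c (p div c) (unit_vec c (p mod c)) $ p'"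
    using p p' c0 by (auto simp: E2_def unit_vec_def)
qed (simp add: E2_def)

lemma eig1: assumes B: "B \<in> carrier_mat n n" and ev: "eigenvalue (kron B (1\<^sub>m m)) c"
  shows "eigenvalue B c"
proof -
  from ev obtain v where v: "v \<in> carrier_vec (n*m)" "v \<noteq> 0\<^sub>v (n*m)" "kron B (1\<^sub>m m) *\<^sub>v v = c \<cdot>\<^sub>v v"
    unfolding eigenvalue_def eigenvector_def using B by (auto simp: kron_def)
  have "\<exists>b<m. sl1 m n b v \<noteq> 0\<^sub>v n"
  proof (rule ccontr)
    assume "\<not> ?thesis"
    hence "v = 0\<^sub>v (n*m)" by (intro ext1[OF v(1)], auto simp: sl1_zero)
    thus False using v by auto
  qed
  then obtain b where b: "b < m" "sl1 m n b v \<noteq> 0\<^sub>v n" by auto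
  have "B *\<^sub>v sl1 m n b v = sl1 m n b (kron B (1\<^sub>m m) *\<^sub>v v)"
    using K1[OF B _ b(1), of v] v by (simp)
  also have "\<dots> = c \<cdot>\<^sub>v sl1 m n b v" using v(3) sl1_smult[OF v(1) b(1)] by simp
  finally show ?thesis unfolding eigenvalue_def eigenvector_def using B b
    by (intro exI[of _ "sl1 m n b v"]) auto
qed

lemma eig2: assumes B: "B \<in> carrier_mat n n" and ev: "eigenvalue (kron (1\<^sub>m m) B) c"
  shows "eigenvalue B c"
proof -
  from ev obtain v where v: "v \<in> carrier_vec (m*n)" "v \<noteq> 0\<^sub>v (m*n)" "kron (1\<^sub>m m) B *\<^sub>v v = c \<cdot>\<^sub>v v"
    unfolding eigenvalue_def eigenvector_def using B by (auto simp: kron_def)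
  have "\<exists>k<m. sl2 n k v \<noteq> 0\<^sub>v n"
  proof (rule ccontr)
    assume "\<not> ?thesis"
    hence "v = 0\<^sub>v (m*n)" by (intro ext2[OF v(1)], auto simp: sl2_zero)
    thus False using v by auto
  qed
  then obtain k where k: "k < m" "sl2 n k v \<noteq> 0\<^sub>v n" by auto
  have "B *\<^sub>v sl2 n k v = sl2 n k (kron (1\<^sub>m m) B *\<^sub>v v)"
    using K2[OF B _ k(1), of v] v by (simp)
  also have "\<dots> = c \<cdot>\<^sub>v sl2 n k v" using v(3) sl2_smult[OF v(1) k(1)] by simp
  finally show ?thesis unfolding eigenvalue_def eigenvector_def using B k
    by (intro exI[of _ "sl2 n k v"]) auto
qed

lemma vstack_mult: assumes A: "A \<in> carrier_mat r1 c" and C: "C \<in> carrier_mat r2 c" and u: "u \<in> carrier_vec c"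
  shows "vstack A C *\<^sub>v u = (A *\<^sub>v u) @\<^sub>v (C *\<^sub>v u)"
proof (rule eq_vecI)
  fix p assume "p < dim_vec ((A *\<^sub>v u) @\<^sub>v (C *\<^sub>v u))"
  hence p: "p < r1 + r2" using A C by auto
  have V: "vstack A C \<in> carrier_mat (r1+r2) c" using A C by (auto simp: vstack_def)
  show "(vstack A C *\<^sub>v u) $ p = ((A *\<^sub>v u) @\<^sub>v (C *\<^sub>v u)) $ p"
    unfolding mat_vec_index_sum[OF V u p] using A C u p
    by (auto simp: vstack_def scalar_prod_def atLeast0LessThan intro!: sum.cong)
qed (insert A C, auto simp: vstack_def)

lemma hstack_mult: assumes A: "A \<in> carrier_mat r c1" and B: "B \<in> carrier_mat r c2"
  and a: "a \<in> carrier_vec c1" and b: "b \<in> carrier_vec c2"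
  shows "hstack A B *\<^sub>v (a @\<^sub>v b) = A *\<^sub>v a + B *\<^sub>v b"
proof (rule eq_vecI)
  fix p assume "p < dim_vec (A *\<^sub>v a + B *\<^sub>v b)"
  hence p: "p < r" using B by auto
  have H: "hstack A B \<in> carrier_mat r (c1+c2)" using A B by (auto simp: hstack_def)
  have ab: "a @\<^sub>v b \<in> carrier_vec (c1+c2)" using a b by auto
  have "(hstack A B *\<^sub>v (a @\<^sub>v b)) $ p = (\<Sum>q<c1+c2. hstack A B $$ (p,q) * (a @\<^sub>v b) $ q)"
    by (rule mat_vec_index_sum[OF H ab p])
  also have "\<dots> = (\<Sum>q<c1. hstack A B $$ (p,q) * (a @\<^sub>v b) $ q) + (\<Sum>q<c2. hstack A B $$ (p,c1+q) * (a @\<^sub>v b) $ (c1+q))"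
  proof -
    let ?f = "\<lambda>q. hstack A B $$ (p,q) * (a @\<^sub>v b) $ q"
    have "sum ?f {c1..<c1+c2} = (\<Sum>q<c2. ?f (c1+q))"
      using sum.shift_bounds_nat_ivl[of ?f 0 c1 c2] by (simp add: add.commute lessThan_atLeast0)
    moreover have "sum ?f {..<c1+c2} = sum ?f {..<c1} + sum ?f {c1..<c1+c2}"
      using sum.atLeastLessThan_concat[of 0 c1 "c1+c2" ?f] by (simp add: lessThan_atLeast0)
    ultimately show ?thesis by simp
  qed
  also have "\<dots> = (\<Sum>q<c1. A $$ (p,q) * a $ q) + (\<Sum>q<c2. B $$ (p,q) * b $ q)"
    using A B a b p by (auto simp: hstack_def intro!: sum.cong)
  also have "\<dots> = (A *\<^sub>v a + B *\<^sub>v b) $ p" using A B a b p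
    by (simp add: mat_vec_index_sum[OF A a p] mat_vec_index_sum[OF B b p])
  finally show "(hstack A B *\<^sub>v (a @\<^sub>v b)) $ p = (A *\<^sub>v a + B *\<^sub>v b) $ p" .
qed (insert A B, auto simp: hstack_def)

lemma sum_split_add: fixes f :: "nat \<Rightarrow> 'a::comm_monoid_add"
  shows "(\<Sum>q<c1+c2. f q) = (\<Sum>q<c1. f q) + (\<Sum>q<c2. f (c1+q))"
proof -
  have "sum f {c1..<c1+c2} = (\<Sum>q<c2. f (c1+q))"
    using sum.shift_bounds_nat_ivl[of f 0 c1 c2] by (simp add: add.commute lessThan_atLeast0)
  moreover have "sum f {..<c1+c2} = sum f {..<c1} + sum f {c1..<c1+c2}"
    using sum.atLeastLessThan_concat[of 0 c1 "c1+c2" f] by (simp add: lessThan_atLeast0)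
  ultimately show ?thesis by simp
qed

lemma fb_carrier: "A \<in> carrier_mat r1 c1 \<Longrightarrow> D \<in> carrier_mat r2 c2 \<Longrightarrow>
  four_block_mat A B C D \<in> carrier_mat (r1+r2) (c1+c2)"
  unfolding four_block_mat_def by auto

lemma fb_top: assumes A: "A \<in> carrier_mat r1 c1" and D: "D \<in> carrier_mat r2 c2"
  and a: "a \<in> carrier_vec c1" and p: "p < r1"
  shows "(four_block_mat A B C D *\<^sub>v (a @\<^sub>v 0\<^sub>v c2)) $ p = (A *\<^sub>v a) $ p"
proof -
  have M: "four_block_mat A B C D \<in> carrier_mat (r1+r2) (c1+c2)" by (rule fb_carrier[OF A D])
  have x: "a @\<^sub>v 0\<^sub>v c2 \<in> carrier_vec (c1+c2)" using a by auto
  have p': "p < r1+r2" using p by auto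
  show ?thesis
    unfolding mat_vec_index_sum[OF M x p'] sum_split_add mat_vec_index_sum[OF A a p]
    using A D a p by (auto simp: four_block_mat_def)
qed

lemma fb_bot: assumes A: "A \<in> carrier_mat r1 c1" and D: "D \<in> carrier_mat r2 c2"
  and d: "d \<in> carrier_vec c2" and p: "p < r2"
  shows "(four_block_mat A B C D *\<^sub>v (0\<^sub>v c1 @\<^sub>v d)) $ (r1+p) = (D *\<^sub>v d) $ p"
proof -
  have M: "four_block_mat A B C D \<in> carrier_mat (r1+r2) (c1+c2)" by (rule fb_carrier[OF A D])
  have x: "0\<^sub>v c1 @\<^sub>v d \<in> carrier_vec (c1+c2)" using d by auto
  have p': "r1+p < r1+r2" using p by auto
  show ?thesis
    unfolding mat_vec_index_sum[OF M x p'] sum_split_add mat_vec_index_sum[OF D d p]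
    using A D d p by (auto simp: four_block_mat_def)
qed

lemma full_space: fixes S :: "complex vec set" assumes S: "S \<subseteq> carrier_vec N" and z: "0\<^sub>v N \<in> S"
  and add: "\<And>u v. u \<in> S \<Longrightarrow> v \<in> S \<Longrightarrow> u + v \<in> S"
  and sm: "\<And>c u. u \<in> S \<Longrightarrow> c \<cdot>\<^sub>v u \<in> S"
  and units: "\<And>p. p < N \<Longrightarrow> unit_vec N p \<in> S"
  shows "S = carrier_vec N"
proof
  show "carrier_vec N \<subseteq> S"
  proof
    fix v :: "complex vec" assume v: "v \<in> carrier_vec N"
    have "vec N (\<lambda>p. if p < k then v $ p else 0) \<in> S" for k
    proof (induct k)
      case 0
      have "vec N (\<lambda>p. if p < 0 then v $ p else 0) = 0\<^sub>v N" by (rule eq_vecI, auto)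
      then show ?case using z by simp
    next
      case (Suc k)
      show ?case
      proof (cases "k < N")
        case True
        have "vec N (\<lambda>p. if p < Suc k then v $ p else 0) =
          vec N (\<lambda>p. if p < k then v $ p else 0) + (v $ k) \<cdot>\<^sub>v unit_vec N k"
          by (rule eq_vecI, auto simp: unit_vec_def less_Suc_eq)
        then show ?thesis using add[OF Suc sm[OF units[OF True]]] by simp
      next
        case False
        have "vec N (\<lambda>p. if p < Suc k then v $ p else 0) = vec N (\<lambda>p. if p < k then v $ p else 0)"
          using False by (intro eq_vecI, auto)
        then show ?thesis using Suc by simp
      qed
    qed
    moreover have "vec N (\<lambda>p. if p < N then v $ p else 0) = v" using v by (intro eq_vecI, auto)
    ultimately show "v \<in> S" by metis
  qed
qed (rule S)

lemma div_lt: "p < r*m \<Longrightarrow> p div m < (r::nat)" by (simp add: less_mult_imp_div_less)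
lemma div_lt2: "p < m*c \<Longrightarrow> p div c < (m::nat)" by (simp add: less_mult_imp_div_less mult.commute)

lemma mod_lt2: "p < m*c \<Longrightarrow> p mod c < (c::nat)" by (cases c) auto

lemma E1_zero: "E1 m r b (0\<^sub>v r) = 0\<^sub>v (r*m)"
  by (rule eq_vecI, auto simp: E1_def div_lt)
lemma E1_add: "u \<in> carrier_vec r \<Longrightarrow> v \<in> carrier_vec r \<Longrightarrow> E1 m r b (u + v) = E1 m r b u + E1 m r b v"
  by (rule eq_vecI, auto simp: E1_def div_lt)
lemma E1_smult: "u \<in> carrier_vec r \<Longrightarrow> E1 m r b (c \<cdot>\<^sub>v u) = c \<cdot>\<^sub>v E1 m r b u"
  by (rule eq_vecI, auto simp: E1_def div_lt)
lemma E2_zero: "E2 m c k (0\<^sub>v c) = 0\<^sub>v (m*c)"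
  by (rule eq_vecI, auto simp: E2_def mod_lt2)
lemma E2_add: "u \<in> carrier_vec c \<Longrightarrow> v \<in> carrier_vec c \<Longrightarrow> E2 m c k (u + v) = E2 m c k u + E2 m c k v"
  by (rule eq_vecI, auto simp: E2_def mod_lt2)
lemma E2_smult: "u \<in> carrier_vec c \<Longrightarrow> E2 m c k (a \<cdot>\<^sub>v u) = a \<cdot>\<^sub>v E2 m c k u"
  by (rule eq_vecI, auto simp: E2_def mod_lt2)

lemma kronE1: assumes X: "X \<in> carrier_mat r c" and u: "u \<in> carrier_vec c" and b: "b < m"
  shows "kron X (1\<^sub>m m) *\<^sub>v E1 m c b u = E1 m r b (X *\<^sub>v u)"
proof (rule ext1[where m=m and r=r])
  have K: "kron X (1\<^sub>m m) \<in> carrier_mat (r*m) (c*m)" using kron_carrier[of X "1\<^sub>m m"] X by auto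
  show "kron X (1\<^sub>m m) *\<^sub>v E1 m c b u \<in> carrier_vec (r*m)" using K by auto
  show "E1 m r b (X *\<^sub>v u) \<in> carrier_vec (r*m)" by simp
  fix b' assume b': "b' < m"
  show "sl1 m r b' (kron X (1\<^sub>m m) *\<^sub>v E1 m c b u) = sl1 m r b' (E1 m r b (X *\<^sub>v u))"
    unfolding K1[OF X E1_carrier b'] sl1_E1[OF b b' u] sl1_E1[OF b b' mult_mat_vec_carrier[OF X u]]
    using X by auto
qed

lemma kronE2: assumes Y: "Y \<in> carrier_mat r c" and u: "u \<in> carrier_vec c" and k: "k < m"
  shows "kron (1\<^sub>m m) Y *\<^sub>v E2 m c k u = E2 m r k (Y *\<^sub>v u)"
proof (rule ext2[where m=m and c=r])
  have K: "kron (1\<^sub>m m) Y \<in> carrier_mat (m*r) (m*c)" using kron_carrier[of "1\<^sub>m m" Y] Y by auto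
  show "kron (1\<^sub>m m) Y *\<^sub>v E2 m c k u \<in> carrier_vec (m*r)" using K by auto
  show "E2 m r k (Y *\<^sub>v u) \<in> carrier_vec (m*r)" by simp
  fix k' assume k': "k' < m"
  show "sl2 r k' (kron (1\<^sub>m m) Y *\<^sub>v E2 m c k u) = sl2 r k' (E2 m r k (Y *\<^sub>v u))"
    unfolding K2[OF Y E2_carrier k'] sl2_E2[OF k k' u] sl2_E2[OF k k' mult_mat_vec_carrier[OF Y u]]
    using Y by auto
qed

lemma unit_append1: "p < N1 \<Longrightarrow> unit_vec (N1+N2) p = unit_vec N1 p @\<^sub>v (0\<^sub>v N2 :: complex vec)"
  by (rule eq_vecI, auto simp: unit_vec_def)
lemma unit_append2: "p < N2 \<Longrightarrow> unit_vec (N1+N2) (N1+p) = 0\<^sub>v N1 @\<^sub>v (unit_vec N2 p :: complex vec)"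
  by (rule eq_vecI, auto simp: unit_vec_def)

lemma S_split: fixes A D :: "complex mat"
  assumes A: "A \<in> carrier_mat N1 N1" and D: "D \<in> carrier_mat N2 N2"
  and noeig: "\<And>c. eigenvalue A c \<Longrightarrow> eigenvalue D c \<Longrightarrow> False"
  and S: "csubspace (N1+N2) S" and inv: "invariant2 (four_block_mat A (0\<^sub>m N1 N2) (0\<^sub>m N2 N1) D) M2 S"
  and s: "s \<in> S"
  shows "vec_first s N1 @\<^sub>v 0\<^sub>v N2 \<in> S \<and> 0\<^sub>v N1 @\<^sub>v vec_last s N2 \<in> S"
proof -
  have sc: "s \<in> carrier_vec (N1+N2)" using S s unfolding csubspace_def by auto
  show ?thesis
    by (rule split_block[OF A D noeig _ _ _ _ _ _ _ vec_first_last_append[OF sc, THEN ssubst[where P="\<lambda>x. x \<in> S"], OF s]],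
      insert S inv, auto simp: csubspace_def invariant2_def)
qed

lemma vec_first_fb: assumes A: "A \<in> carrier_mat r1 c1" and D: "D \<in> carrier_mat r2 c2"
  and a: "a \<in> carrier_vec c1"
  shows "vec_first (four_block_mat A B C D *\<^sub>v (a @\<^sub>v 0\<^sub>v c2)) r1 = A *\<^sub>v a"
proof (rule eq_vecI)
  fix p assume "p < dim_vec (A *\<^sub>v a)"
  hence p: "p < r1" using A by simp
  have "vec_first (four_block_mat A B C D *\<^sub>v (a @\<^sub>v 0\<^sub>v c2)) r1 $ p
     = (four_block_mat A B C D *\<^sub>v (a @\<^sub>v 0\<^sub>v c2)) $ p"
    by (simp only: vec_first_def index_vec[OF p])
  also have "\<dots> = (A *\<^sub>v a) $ p" by (rule fb_top[OF A D a p])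
  finally show "vec_first (four_block_mat A B C D *\<^sub>v (a @\<^sub>v 0\<^sub>v c2)) r1 $ p = (A *\<^sub>v a) $ p" .
qed (insert A, auto)

lemma vec_last_fb: assumes A: "A \<in> carrier_mat r1 c1" and D: "D \<in> carrier_mat r2 c2"
  and d: "d \<in> carrier_vec c2"
  shows "vec_last (four_block_mat A B C D *\<^sub>v (0\<^sub>v c1 @\<^sub>v d)) r2 = D *\<^sub>v d"
proof -
  have dm: "dim_vec (four_block_mat A B C D *\<^sub>v (0\<^sub>v c1 @\<^sub>v d)) = r1 + r2"
    using fb_carrier[OF A D, of B C] by auto
  show ?thesis
  proof (rule eq_vecI)
    fix p assume "p < dim_vec (D *\<^sub>v d)"
    hence p: "p < r2" using D by simp
    have "vec_last (four_block_mat A B C D *\<^sub>v (0\<^sub>v c1 @\<^sub>v d)) r2 $ p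
       = (four_block_mat A B C D *\<^sub>v (0\<^sub>v c1 @\<^sub>v d)) $ (r1 + p)"
      by (simp only: vec_last_def index_vec[OF p] dm, simp)
    also have "\<dots> = (D *\<^sub>v d) $ p" by (rule fb_bot[OF A D d p])
    finally show "vec_last (four_block_mat A B C D *\<^sub>v (0\<^sub>v c1 @\<^sub>v d)) r2 $ p = (D *\<^sub>v d) $ p" .
  qed (insert D, auto)
qed

lemma blk: fixes A D C C' X Y :: "complex mat"
  assumes A: "A \<in> carrier_mat N1 N1" and D: "D \<in> carrier_mat N2 N2"
  and C: "C \<in> carrier_mat N1 N1" and C': "C' \<in> carrier_mat N2 N2"
  and noeig: "\<forall>c. \<not> (eigenvalue A c \<and> eigenvalue D c)"
  and S: "csubspace (N1+N2) S"
  and inv: "invariant2 (four_block_mat A (0\<^sub>m N1 N2) (0\<^sub>m N2 N1) D) (four_block_mat C X Y C') S"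
  shows "\<And>a. a \<in> carrier_vec N1 \<Longrightarrow> a @\<^sub>v 0\<^sub>v N2 \<in> S \<Longrightarrow> (A *\<^sub>v a) @\<^sub>v 0\<^sub>v N2 \<in> S \<and> (C *\<^sub>v a) @\<^sub>v 0\<^sub>v N2 \<in> S"
    and "\<And>d. d \<in> carrier_vec N2 \<Longrightarrow> 0\<^sub>v N1 @\<^sub>v d \<in> S \<Longrightarrow> 0\<^sub>v N1 @\<^sub>v (D *\<^sub>v d) \<in> S \<and> 0\<^sub>v N1 @\<^sub>v (C' *\<^sub>v d) \<in> S"
proof -
  have sp: "s \<in> S \<Longrightarrow> vec_first s N1 @\<^sub>v 0\<^sub>v N2 \<in> S \<and> 0\<^sub>v N1 @\<^sub>v vec_last s N2 \<in> S" for s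
    by (rule S_split[OF A D _ S inv], insert noeig, blast)
  fix a assume a: "a \<in> carrier_vec N1" and aS: "a @\<^sub>v 0\<^sub>v N2 \<in> S"
  have 1: "four_block_mat A (0\<^sub>m N1 N2) (0\<^sub>m N2 N1) D *\<^sub>v (a @\<^sub>v 0\<^sub>v N2) \<in> S"
    and 2: "four_block_mat C X Y C' *\<^sub>v (a @\<^sub>v 0\<^sub>v N2) \<in> S" using inv aS unfolding invariant2_def by auto
  show "(A *\<^sub>v a) @\<^sub>v 0\<^sub>v N2 \<in> S \<and> (C *\<^sub>v a) @\<^sub>v 0\<^sub>v N2 \<in> S"
    using sp[OF 1] sp[OF 2] unfolding vec_first_fb[OF A D a] vec_first_fb[OF C C' a] by auto
next
  have sp: "s \<in> S \<Longrightarrow> vec_first s N1 @\<^sub>v 0\<^sub>v N2 \<in> S \<and> 0\<^sub>v N1 @\<^sub>v vec_last s N2 \<in> S" for s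
    by (rule S_split[OF A D _ S inv], insert noeig, blast)
  fix d assume d: "d \<in> carrier_vec N2" and dS: "0\<^sub>v N1 @\<^sub>v d \<in> S"
  have 1: "four_block_mat A (0\<^sub>m N1 N2) (0\<^sub>m N2 N1) D *\<^sub>v (0\<^sub>v N1 @\<^sub>v d) \<in> S"
    and 2: "four_block_mat C X Y C' *\<^sub>v (0\<^sub>v N1 @\<^sub>v d) \<in> S" using inv dS unfolding invariant2_def by auto
  show "0\<^sub>v N1 @\<^sub>v (D *\<^sub>v d) \<in> S \<and> 0\<^sub>v N1 @\<^sub>v (C' *\<^sub>v d) \<in> S"
    using sp[OF 1] sp[OF 2] unfolding vec_last_fb[OF A D d] vec_last_fb[OF C C' d] by auto
qed

lemma app0_add1: "a \<in> carrier_vec n \<Longrightarrow> b \<in> carrier_vec n \<Longrightarrow>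
  (a @\<^sub>v 0\<^sub>v m) + (b @\<^sub>v 0\<^sub>v m) = (a + b) @\<^sub>v (0\<^sub>v m :: complex vec)"
  by (rule eq_vecI, auto)
lemma app0_add2: "a \<in> carrier_vec n \<Longrightarrow> b \<in> carrier_vec n \<Longrightarrow>
  (0\<^sub>v m @\<^sub>v a) + (0\<^sub>v m @\<^sub>v b) = (0\<^sub>v m :: complex vec) @\<^sub>v (a + b)"
  by (rule eq_vecI, auto)

lemma smult_zero_vec'[simp]: "c \<cdot>\<^sub>v (0\<^sub>v m :: complex vec) = 0\<^sub>v m"
  by (rule eq_vecI, auto)

lemma vfa: "a \<in> carrier_vec n \<Longrightarrow> vec_first (a @\<^sub>v b) n = a"
  by (rule eq_vecI, auto simp: vec_first_def)
lemma vla: "b \<in> carrier_vec m \<Longrightarrow> vec_last (a @\<^sub>v b) m = b"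
  by (rule eq_vecI, auto simp: vec_last_def)

lemma T_stable:
  fixes B1 B2 i j B1' B2' i' j' X Y :: "complex mat" and n w n' w' :: nat
  assumes B1: "B1 \<in> carrier_mat n n" and B2: "B2 \<in> carrier_mat n n"
    and i: "i \<in> carrier_mat n w" and j: "j \<in> carrier_mat w n"
    and B1': "B1' \<in> carrier_mat n' n'" and B2': "B2' \<in> carrier_mat n' n'"
    and i': "i' \<in> carrier_mat n' w'" and j': "j' \<in> carrier_mat w' n'"
    and noeig0: "\<forall>c. \<not> (eigenvalue B1 c \<and> eigenvalue B1' c)"
    and st: "stable (B1, B2, i, j)" and st': "stable (B1', B2', i', j')"
  shows "stable (four_block_mat (kron B1 (1\<^sub>m w')) (0\<^sub>m (n * w') (w * n')) (0\<^sub>m (w * n') (n * w')) (kron (1\<^sub>m w) B1'),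
      four_block_mat (kron B2 (1\<^sub>m w')) X Y (kron (1\<^sub>m w) B2'),
      vstack (kron i (1\<^sub>m w')) (kron (1\<^sub>m w) i'),
      hstack (kron j (1\<^sub>m w')) (kron (1\<^sub>m w) j'))"
proof -
  let ?N1 = "n * w'" and ?N2 = "w * n'"
  let ?A = "kron B1 (1\<^sub>m w')" and ?D = "kron (1\<^sub>m w) B1'"
  let ?C = "kron B2 (1\<^sub>m w')" and ?C' = "kron (1\<^sub>m w) B2'"
  let ?I1 = "kron i (1\<^sub>m w')" and ?I2 = "kron (1\<^sub>m w) i'"
  let ?M1 = "four_block_mat ?A (0\<^sub>m ?N1 ?N2) (0\<^sub>m ?N2 ?N1) ?D"
  let ?M2 = "four_block_mat ?C X Y ?C'"
  have A: "?A \<in> carrier_mat ?N1 ?N1" using kron_carrier[of B1 "1\<^sub>m w'"] B1 by auto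
  have D: "?D \<in> carrier_mat ?N2 ?N2" using kron_carrier[of "1\<^sub>m w" B1'] B1' by auto
  have C: "?C \<in> carrier_mat ?N1 ?N1" using kron_carrier[of B2 "1\<^sub>m w'"] B2 by auto
  have C': "?C' \<in> carrier_mat ?N2 ?N2" using kron_carrier[of "1\<^sub>m w" B2'] B2' by auto
  have I1: "?I1 \<in> carrier_mat ?N1 (w*w')" using kron_carrier[of i "1\<^sub>m w'"] i by auto
  have I2: "?I2 \<in> carrier_mat ?N2 (w*w')" using kron_carrier[of "1\<^sub>m w" i'] i' by auto
  have noeig: "eigenvalue ?A c \<Longrightarrow> eigenvalue ?D c \<Longrightarrow> False" for c
    using eig1[OF B1] eig2[OF B1'] noeig0 by blast
  have dM1: "dim_row ?M1 = ?N1 + ?N2" using A D by simp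
  have dI: "dim_col (vstack ?I1 ?I2) = w*w'" using I1 by (simp add: vstack_def)
  show ?thesis unfolding stable_def prod.case dM1 dI
  proof (intro allI impI, elim conjE)
    fix S assume S: "csubspace (?N1 + ?N2) S" and im: "\<forall>u\<in>carrier_vec (w*w'). vstack ?I1 ?I2 *\<^sub>v u \<in> S"
      and inv: "invariant2 ?M1 ?M2 S"
    have noeigO: "\<forall>c. \<not> (eigenvalue ?A c \<and> eigenvalue ?D c)" using noeig by blast
    note blk = blk[OF A D C C' noeigO S inv]
    have sp: "s \<in> S \<Longrightarrow> vec_first s ?N1 @\<^sub>v 0\<^sub>v ?N2 \<in> S \<and> 0\<^sub>v ?N1 @\<^sub>v vec_last s ?N2 \<in> S" for s
      by (rule S_split[OF A D _ S inv], blast intro: noeig)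
    have Sc: "S \<subseteq> carrier_vec (?N1+?N2)" and z: "0\<^sub>v (?N1+?N2) \<in> S"
      and add: "\<And>u v. u \<in> S \<Longrightarrow> v \<in> S \<Longrightarrow> u + v \<in> S" and sm: "\<And>c u. u \<in> S \<Longrightarrow> c \<cdot>\<^sub>v u \<in> S"
      using S unfolding csubspace_def by auto
    have "0\<^sub>v ?N1 @\<^sub>v 0\<^sub>v ?N2 = (0\<^sub>v (?N1+?N2) :: complex vec)" by (rule eq_vecI, auto)
    hence z': "0\<^sub>v ?N1 @\<^sub>v 0\<^sub>v ?N2 \<in> S" using z by simp
    (* top part *)
    have top: "E1 w' n b v @\<^sub>v 0\<^sub>v ?N2 \<in> S" if b: "b < w'" and v: "v \<in> carrier_vec n" for b v
    proof -
      define T where "T = {v \<in> carrier_vec n. E1 w' n b v @\<^sub>v 0\<^sub>v ?N2 \<in> S}"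
      have "csubspace n T" unfolding csubspace_def T_def
      proof (intro conjI ballI allI)
        show "0\<^sub>v n \<in> {v \<in> carrier_vec n. E1 w' n b v @\<^sub>v 0\<^sub>v ?N2 \<in> S}" using z' by (simp add: E1_zero)
        fix u v assume u: "u \<in> {v \<in> carrier_vec n. E1 w' n b v @\<^sub>v 0\<^sub>v ?N2 \<in> S}"
        { assume v: "v \<in> {v \<in> carrier_vec n. E1 w' n b v @\<^sub>v 0\<^sub>v ?N2 \<in> S}"
          show "u + v \<in> {v \<in> carrier_vec n. E1 w' n b v @\<^sub>v 0\<^sub>v ?N2 \<in> S}"
            using add[of "E1 w' n b u @\<^sub>v 0\<^sub>v ?N2" "E1 w' n b v @\<^sub>v 0\<^sub>v ?N2"] u v
              app0_add1[where a="E1 w' n b u" and b="E1 w' n b v" and n="n*w'" and m="?N2"]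
            by (auto simp: E1_add) }
        fix c
        show "c \<cdot>\<^sub>v u \<in> {v \<in> carrier_vec n. E1 w' n b v @\<^sub>v 0\<^sub>v ?N2 \<in> S}"
          using sm[of "E1 w' n b u @\<^sub>v 0\<^sub>v ?N2" c] u
          by (auto simp: E1_smult smult_append_vec)
      qed auto
      moreover have "\<forall>u\<in>carrier_vec w. i *\<^sub>v u \<in> T"
      proof
        fix u :: "complex vec" assume u: "u \<in> carrier_vec w"
        have x: "E1 w' w b u \<in> carrier_vec (w*w')" by simp
        have "vstack ?I1 ?I2 *\<^sub>v E1 w' w b u = (E1 w' n b (i *\<^sub>v u)) @\<^sub>v (?I2 *\<^sub>v E1 w' w b u)"
          unfolding vstack_mult[OF I1 I2 x] kronE1[OF i u b] ..
        moreover have "vstack ?I1 ?I2 *\<^sub>v E1 w' w b u \<in> S" using im x by blast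
        ultimately have "(E1 w' n b (i *\<^sub>v u)) @\<^sub>v (?I2 *\<^sub>v E1 w' w b u) \<in> S" by simp
        from sp[OF this] have "E1 w' n b (i *\<^sub>v u) @\<^sub>v 0\<^sub>v ?N2 \<in> S"
          by (subst (asm) vfa, auto)
        thus "i *\<^sub>v u \<in> T" unfolding T_def using i u by auto
      qed
      moreover have "invariant2 B1 B2 T" unfolding invariant2_def
      proof
        fix v assume "v \<in> T"
        hence v: "v \<in> carrier_vec n" and vS: "E1 w' n b v @\<^sub>v 0\<^sub>v ?N2 \<in> S" unfolding T_def by auto
        from blk(1)[OF _ vS] b v have "E1 w' n b (B1 *\<^sub>v v) @\<^sub>v 0\<^sub>v ?N2 \<in> S \<and> E1 w' n b (B2 *\<^sub>v v) @\<^sub>v 0\<^sub>v ?N2 \<in> S"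
          unfolding kronE1[OF B1 v b] kronE1[OF B2 v b] by auto
        thus "B1 *\<^sub>v v \<in> T \<and> B2 *\<^sub>v v \<in> T" unfolding T_def using B1 B2 v by auto
      qed
      ultimately have "T = carrier_vec n" using st B1 i unfolding stable_def by auto
      thus ?thesis using v unfolding T_def by auto
    qed
    have bot: "0\<^sub>v ?N1 @\<^sub>v E2 w n' k v \<in> S" if k: "k < w" and v: "v \<in> carrier_vec n'" for k v
    proof -
      define T where "T = {v \<in> carrier_vec n'. 0\<^sub>v ?N1 @\<^sub>v E2 w n' k v \<in> S}"
      have "csubspace n' T" unfolding csubspace_def T_def
      proof (intro conjI ballI allI)
        show "0\<^sub>v n' \<in> {v \<in> carrier_vec n'. 0\<^sub>v ?N1 @\<^sub>v E2 w n' k v \<in> S}" using z' by (simp add: E2_zero)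
        fix u v assume u: "u \<in> {v \<in> carrier_vec n'. 0\<^sub>v ?N1 @\<^sub>v E2 w n' k v \<in> S}"
        { assume v: "v \<in> {v \<in> carrier_vec n'. 0\<^sub>v ?N1 @\<^sub>v E2 w n' k v \<in> S}"
          show "u + v \<in> {v \<in> carrier_vec n'. 0\<^sub>v ?N1 @\<^sub>v E2 w n' k v \<in> S}"
            using add[of "0\<^sub>v ?N1 @\<^sub>v E2 w n' k u" "0\<^sub>v ?N1 @\<^sub>v E2 w n' k v"] u v
              app0_add2[where a="E2 w n' k u" and b="E2 w n' k v" and n="w*n'" and m="?N1"]
            by (auto simp: E2_add) }
        fix c
        show "c \<cdot>\<^sub>v u \<in> {v \<in> carrier_vec n'. 0\<^sub>v ?N1 @\<^sub>v E2 w n' k v \<in> S}"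
          using sm[of "0\<^sub>v ?N1 @\<^sub>v E2 w n' k u" c] u
          by (auto simp: E2_smult smult_append_vec)
      qed auto
      moreover have "\<forall>u\<in>carrier_vec w'. i' *\<^sub>v u \<in> T"
      proof
        fix u :: "complex vec" assume u: "u \<in> carrier_vec w'"
        have x: "E2 w w' k u \<in> carrier_vec (w*w')" by simp
        have "vstack ?I1 ?I2 *\<^sub>v E2 w w' k u = (?I1 *\<^sub>v E2 w w' k u) @\<^sub>v (E2 w n' k (i' *\<^sub>v u))"
          unfolding vstack_mult[OF I1 I2 x] kronE2[OF i' u k] ..
        moreover have "vstack ?I1 ?I2 *\<^sub>v E2 w w' k u \<in> S" using im x by blast
        ultimately have "(?I1 *\<^sub>v E2 w w' k u) @\<^sub>v (E2 w n' k (i' *\<^sub>v u)) \<in> S" by simp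
        from sp[OF this] have "0\<^sub>v ?N1 @\<^sub>v E2 w n' k (i' *\<^sub>v u) \<in> S"
          by (subst (asm) vla, auto)
        thus "i' *\<^sub>v u \<in> T" unfolding T_def using i' u by auto
      qed
      moreover have "invariant2 B1' B2' T" unfolding invariant2_def
      proof
        fix v assume "v \<in> T"
        hence v: "v \<in> carrier_vec n'" and vS: "0\<^sub>v ?N1 @\<^sub>v E2 w n' k v \<in> S" unfolding T_def by auto
        from blk(2)[OF _ vS] k v have "0\<^sub>v ?N1 @\<^sub>v E2 w n' k (B1' *\<^sub>v v) \<in> S \<and> 0\<^sub>v ?N1 @\<^sub>v E2 w n' k (B2' *\<^sub>v v) \<in> S"
          unfolding kronE2[OF B1' v k] kronE2[OF B2' v k] by auto
        thus "B1' *\<^sub>v v \<in> T \<and> B2' *\<^sub>v v \<in> T" unfolding T_def using B1' B2' v by auto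
      qed
      ultimately have "T = carrier_vec n'" using st' B1' i' unfolding stable_def by auto
      thus ?thesis using v unfolding T_def by auto
    qed
    show "S = carrier_vec (?N1 + ?N2)"
    proof (rule full_space[OF Sc z add sm])
      fix p assume p: "p < ?N1 + ?N2"
      show "unit_vec (?N1 + ?N2) p \<in> S"
      proof (cases "p < ?N1")
        case True
        have "w' > 0" using True by (cases w', auto)
        thus ?thesis using top[of "p mod w'" "unit_vec n (p div w')"]
          unfolding unit_append1[OF True] unit_E1[OF True] by auto
      next
        case False
        define q where "q = p - ?N1"
        have q: "q < ?N2" and pq: "p = ?N1 + q" using p False unfolding q_def by auto
        have "n' > 0" using q by (cases n', auto)
        thus ?thesis using bot[of "q div n'" "unit_vec n' (q mod n')"] div_lt2[OF q]
          unfolding pq unit_append2[OF q] unit_E2[OF q] by auto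
      qed
    qed
  qed
qed

lemma T_costable:
  fixes B1 B2 i j B1' B2' i' j' X Y :: "complex mat" and n w n' w' :: nat
  assumes B1: "B1 \<in> carrier_mat n n" and B2: "B2 \<in> carrier_mat n n"
    and i: "i \<in> carrier_mat n w" and j: "j \<in> carrier_mat w n"
    and B1': "B1' \<in> carrier_mat n' n'" and B2': "B2' \<in> carrier_mat n' n'"
    and i': "i' \<in> carrier_mat n' w'" and j': "j' \<in> carrier_mat w' n'"
    and noeig0: "\<forall>c. \<not> (eigenvalue B1 c \<and> eigenvalue B1' c)"
    and st: "costable (B1, B2, i, j)" and st': "costable (B1', B2', i', j')"
  shows "costable (four_block_mat (kron B1 (1\<^sub>m w')) (0\<^sub>m (n * w') (w * n')) (0\<^sub>m (w * n') (n * w')) (kron (1\<^sub>m w) B1'),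
      four_block_mat (kron B2 (1\<^sub>m w')) X Y (kron (1\<^sub>m w) B2'),
      vstack (kron i (1\<^sub>m w')) (kron (1\<^sub>m w) i'),
      hstack (kron j (1\<^sub>m w')) (kron (1\<^sub>m w) j'))"
proof -
  let ?N1 = "n * w'" and ?N2 = "w * n'"
  let ?A = "kron B1 (1\<^sub>m w')" and ?D = "kron (1\<^sub>m w) B1'"
  let ?C = "kron B2 (1\<^sub>m w')" and ?C' = "kron (1\<^sub>m w) B2'"
  let ?J1 = "kron j (1\<^sub>m w')" and ?J2 = "kron (1\<^sub>m w) j'"
  let ?M1 = "four_block_mat ?A (0\<^sub>m ?N1 ?N2) (0\<^sub>m ?N2 ?N1) ?D"
  let ?M2 = "four_block_mat ?C X Y ?C'"
  have A: "?A \<in> carrier_mat ?N1 ?N1" using kron_carrier[of B1 "1\<^sub>m w'"] B1 by auto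
  have D: "?D \<in> carrier_mat ?N2 ?N2" using kron_carrier[of "1\<^sub>m w" B1'] B1' by auto
  have C: "?C \<in> carrier_mat ?N1 ?N1" using kron_carrier[of B2 "1\<^sub>m w'"] B2 by auto
  have C': "?C' \<in> carrier_mat ?N2 ?N2" using kron_carrier[of "1\<^sub>m w" B2'] B2' by auto
  have J1: "?J1 \<in> carrier_mat (w*w') ?N1" using kron_carrier[of j "1\<^sub>m w'"] j by auto
  have J2: "?J2 \<in> carrier_mat (w*w') ?N2" using kron_carrier[of "1\<^sub>m w" j'] j' by auto
  have noeig: "\<forall>c. \<not> (eigenvalue ?A c \<and> eigenvalue ?D c)"
    using eig1[OF B1] eig2[OF B1'] noeig0 by blast
  have dM1: "dim_row ?M1 = ?N1 + ?N2" using A D by simp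
  have dJ: "dim_row (hstack ?J1 ?J2) = w*w'" using J1 by (simp add: hstack_def)
  show ?thesis unfolding costable_def prod.case dM1 dJ
  proof (intro allI impI, elim conjE)
    fix S assume S: "csubspace (?N1 + ?N2) S"
      and ker: "S \<subseteq> {v. hstack ?J1 ?J2 *\<^sub>v v = 0\<^sub>v (w*w')}"
      and inv: "invariant2 ?M1 ?M2 S"
    note blk = blk[OF A D C C' noeig S inv]
    have sp: "s \<in> S \<Longrightarrow> vec_first s ?N1 @\<^sub>v 0\<^sub>v ?N2 \<in> S \<and> 0\<^sub>v ?N1 @\<^sub>v vec_last s ?N2 \<in> S" for s
      by (rule S_split[OF A D _ S inv], insert noeig, blast)
    have Sc: "S \<subseteq> carrier_vec (?N1+?N2)" and z: "0\<^sub>v (?N1+?N2) \<in> S"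
      and add: "\<And>u v. u \<in> S \<Longrightarrow> v \<in> S \<Longrightarrow> u + v \<in> S" and sm: "\<And>c u. u \<in> S \<Longrightarrow> c \<cdot>\<^sub>v u \<in> S"
      using S unfolding csubspace_def by auto
    have zz: "0\<^sub>v ?N1 @\<^sub>v 0\<^sub>v ?N2 = (0\<^sub>v (?N1+?N2) :: complex vec)" by (rule eq_vecI, auto)
    hence z': "0\<^sub>v ?N1 @\<^sub>v 0\<^sub>v ?N2 \<in> S" using z by simp
    have top: "a = 0\<^sub>v ?N1" if a: "a \<in> carrier_vec ?N1" and aS: "a @\<^sub>v 0\<^sub>v ?N2 \<in> S" for a
    proof -
      have "sl1 w' n b a = 0\<^sub>v n" if b: "b < w'" for b
      proof -
        define T where "T = sl1 w' n b ` {a \<in> carrier_vec ?N1. a @\<^sub>v 0\<^sub>v ?N2 \<in> S}"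
        have "csubspace n T" unfolding csubspace_def
        proof (intro conjI ballI allI)
          show "T \<subseteq> carrier_vec n" unfolding T_def by auto
          show "0\<^sub>v n \<in> T" unfolding T_def using z' sl1_zero[OF b, of n]
            by (intro image_eqI[of _ _ "0\<^sub>v ?N1"], auto)
          fix x y assume x: "x \<in> T"
          then obtain a1 where a1: "a1 \<in> carrier_vec ?N1" "a1 @\<^sub>v 0\<^sub>v ?N2 \<in> S" "x = sl1 w' n b a1"
            unfolding T_def by auto
          { assume "y \<in> T"
            then obtain a2 where a2: "a2 \<in> carrier_vec ?N1" "a2 @\<^sub>v 0\<^sub>v ?N2 \<in> S" "y = sl1 w' n b a2"
              unfolding T_def by auto
            have "(a1 + a2) @\<^sub>v 0\<^sub>v ?N2 \<in> S"
              using add[OF a1(2) a2(2)] app0_add1[OF a1(1) a2(1), of ?N2] by simp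
            moreover have "x + y = sl1 w' n b (a1 + a2)" using sl1_add[OF a1(1) a2(1) b] a1 a2 by simp
            ultimately show "x + y \<in> T" unfolding T_def using a1 a2 by auto }
          fix c
          have "(c \<cdot>\<^sub>v a1) @\<^sub>v 0\<^sub>v ?N2 \<in> S" using sm[OF a1(2), of c] by (simp add: smult_append_vec)
          moreover have "c \<cdot>\<^sub>v x = sl1 w' n b (c \<cdot>\<^sub>v a1)" using sl1_smult[OF a1(1) b] a1 by simp
          ultimately show "c \<cdot>\<^sub>v x \<in> T" unfolding T_def using a1 by auto
        qed
        moreover have "T \<subseteq> {v. j *\<^sub>v v = 0\<^sub>v (dim_row j)}"
        proof
          fix x assume "x \<in> T"
          then obtain a1 where a1: "a1 \<in> carrier_vec ?N1" "a1 @\<^sub>v 0\<^sub>v ?N2 \<in> S" "x = sl1 w' n b a1"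
            unfolding T_def by auto
          have "hstack ?J1 ?J2 *\<^sub>v (a1 @\<^sub>v 0\<^sub>v ?N2) = 0\<^sub>v (w*w')" using ker a1 by auto
          hence "?J1 *\<^sub>v a1 = 0\<^sub>v (w*w')" unfolding hstack_mult[OF J1 J2 a1(1) zero_carrier_vec]
            using J1 J2 a1 by simp
          hence "j *\<^sub>v x = 0\<^sub>v w" unfolding a1(3) K1[OF j a1(1) b, symmetric] using sl1_zero[OF b] by simp
          thus "x \<in> {v. j *\<^sub>v v = 0\<^sub>v (dim_row j)}" using j by simp
        qed
        moreover have "invariant2 B1 B2 T" unfolding invariant2_def
        proof
          fix x assume "x \<in> T"
          then obtain a1 where a1: "a1 \<in> carrier_vec ?N1" "a1 @\<^sub>v 0\<^sub>v ?N2 \<in> S" "x = sl1 w' n b a1"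
            unfolding T_def by auto
          from blk(1)[OF a1(1,2)] have 1: "(?A *\<^sub>v a1) @\<^sub>v 0\<^sub>v ?N2 \<in> S" "(?C *\<^sub>v a1) @\<^sub>v 0\<^sub>v ?N2 \<in> S" by auto
          have "B1 *\<^sub>v x = sl1 w' n b (?A *\<^sub>v a1)" "B2 *\<^sub>v x = sl1 w' n b (?C *\<^sub>v a1)"
            unfolding a1(3) K1[OF B1 a1(1) b] K1[OF B2 a1(1) b] by auto
          thus "B1 *\<^sub>v x \<in> T \<and> B2 *\<^sub>v x \<in> T" unfolding T_def using 1 A C a1 by auto
        qed
        ultimately have "T = {0\<^sub>v n}" using st B1 unfolding costable_def by auto
        thus ?thesis unfolding T_def using a aS by auto
      qed
      thus ?thesis by (intro ext1[OF a], auto simp: sl1_zero)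
    qed
    have bot: "d = 0\<^sub>v ?N2" if d: "d \<in> carrier_vec ?N2" and dS: "0\<^sub>v ?N1 @\<^sub>v d \<in> S" for d
    proof -
      have "sl2 n' k d = 0\<^sub>v n'" if k: "k < w" for k
      proof -
        define T where "T = sl2 n' k ` {d \<in> carrier_vec ?N2. 0\<^sub>v ?N1 @\<^sub>v d \<in> S}"
        have "csubspace n' T" unfolding csubspace_def
        proof (intro conjI ballI allI)
          show "T \<subseteq> carrier_vec n'" unfolding T_def by auto
          show "0\<^sub>v n' \<in> T" unfolding T_def using z' sl2_zero[OF k, of n']
            by (intro image_eqI[of _ _ "0\<^sub>v ?N2"], auto)
          fix x y assume x: "x \<in> T"
          then obtain a1 where a1: "a1 \<in> carrier_vec ?N2" "0\<^sub>v ?N1 @\<^sub>v a1 \<in> S" "x = sl2 n' k a1"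
            unfolding T_def by auto
          { assume "y \<in> T"
            then obtain a2 where a2: "a2 \<in> carrier_vec ?N2" "0\<^sub>v ?N1 @\<^sub>v a2 \<in> S" "y = sl2 n' k a2"
              unfolding T_def by auto
            have "0\<^sub>v ?N1 @\<^sub>v (a1 + a2) \<in> S"
              using add[OF a1(2) a2(2)] app0_add2[OF a1(1) a2(1), of ?N1] by simp
            moreover have "x + y = sl2 n' k (a1 + a2)" using sl2_add[OF a1(1) a2(1) k] a1 a2 by simp
            ultimately show "x + y \<in> T" unfolding T_def using a1 a2 by auto }
          fix c
          have "0\<^sub>v ?N1 @\<^sub>v (c \<cdot>\<^sub>v a1) \<in> S" using sm[OF a1(2), of c] by (simp add: smult_append_vec)
          moreover have "c \<cdot>\<^sub>v x = sl2 n' k (c \<cdot>\<^sub>v a1)" using sl2_smult[OF a1(1) k] a1 by simp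
          ultimately show "c \<cdot>\<^sub>v x \<in> T" unfolding T_def using a1 by auto
        qed
        moreover have "T \<subseteq> {v. j' *\<^sub>v v = 0\<^sub>v (dim_row j')}"
        proof
          fix x assume "x \<in> T"
          then obtain a1 where a1: "a1 \<in> carrier_vec ?N2" "0\<^sub>v ?N1 @\<^sub>v a1 \<in> S" "x = sl2 n' k a1"
            unfolding T_def by auto
          have "hstack ?J1 ?J2 *\<^sub>v (0\<^sub>v ?N1 @\<^sub>v a1) = 0\<^sub>v (w*w')" using ker a1 by auto
          hence "?J2 *\<^sub>v a1 = 0\<^sub>v (w*w')" unfolding hstack_mult[OF J1 J2 zero_carrier_vec a1(1)]
            using J1 J2 a1 by simp
          hence "j' *\<^sub>v x = 0\<^sub>v w'" unfolding a1(3) K2[OF j' a1(1) k, symmetric] using sl2_zero[OF k] by simp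
          thus "x \<in> {v. j' *\<^sub>v v = 0\<^sub>v (dim_row j')}" using j' by simp
        qed
        moreover have "invariant2 B1' B2' T" unfolding invariant2_def
        proof
          fix x assume "x \<in> T"
          then obtain a1 where a1: "a1 \<in> carrier_vec ?N2" "0\<^sub>v ?N1 @\<^sub>v a1 \<in> S" "x = sl2 n' k a1"
            unfolding T_def by auto
          from blk(2)[OF a1(1,2)] have 1: "0\<^sub>v ?N1 @\<^sub>v (?D *\<^sub>v a1) \<in> S" "0\<^sub>v ?N1 @\<^sub>v (?C' *\<^sub>v a1) \<in> S" by auto
          have "B1' *\<^sub>v x = sl2 n' k (?D *\<^sub>v a1)" "B2' *\<^sub>v x = sl2 n' k (?C' *\<^sub>v a1)"
            unfolding a1(3) K2[OF B1' a1(1) k] K2[OF B2' a1(1) k] by auto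
          thus "B1' *\<^sub>v x \<in> T \<and> B2' *\<^sub>v x \<in> T" unfolding T_def using 1 D C' a1 by auto
        qed
        ultimately have "T = {0\<^sub>v n'}" using st' B1' unfolding costable_def by auto
        thus ?thesis unfolding T_def using d dS by auto
      qed
      thus ?thesis by (intro ext2[OF d], auto simp: sl2_zero)
    qed
    show "S = {0\<^sub>v (?N1 + ?N2)}"
    proof
      show "{0\<^sub>v (?N1 + ?N2)} \<subseteq> S" using z by auto
      show "S \<subseteq> {0\<^sub>v (?N1 + ?N2)}"
      proof
        fix s assume s: "s \<in> S"
        have sc: "s \<in> carrier_vec (?N1+?N2)" using s Sc by auto
        have "vec_first s ?N1 = 0\<^sub>v ?N1" using top[of "vec_first s ?N1"] sp[OF s] by auto
        moreover have "vec_last s ?N2 = 0\<^sub>v ?N2" using bot[of "vec_last s ?N2"] sp[OF s] by auto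
        ultimately have "s = 0\<^sub>v ?N1 @\<^sub>v 0\<^sub>v ?N2" using vec_first_last_append[OF sc] by metis
        thus "s \<in> {0\<^sub>v (?N1 + ?N2)}" using zz by simp
      qed
    qed
  qed
qed

theorem lemma4p5:
  fixes B1 B2 i j B1' B2' i' j' :: "complex mat" and n w n' w' :: nat
  assumes "B1 \<in> carrier_mat n n" and "B2 \<in> carrier_mat n n"
    and "i \<in> carrier_mat n w" and "j \<in> carrier_mat w n"
    and "B1' \<in> carrier_mat n' n'" and "B2' \<in> carrier_mat n' n'"
    and "i' \<in> carrier_mat n' w'" and "j' \<in> carrier_mat w' n'"
    and "\<forall>c. \<not> (eigenvalue B1 c \<and> eigenvalue B1' c)"
  shows "(stable (B1, B2, i, j) \<and> stable (B1', B2', i', j')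
            \<longrightarrow> stable (Tmap (B1, B2, i, j) (B1', B2', i', j')))
       \<and> (costable (B1, B2, i, j) \<and> costable (B1', B2', i', j')
            \<longrightarrow> costable (Tmap (B1, B2, i, j) (B1', B2', i', j')))"
proof -
  have d: "dim_row B1 = n" "dim_col i = w" "dim_row B1' = n'" "dim_col i' = w'" using assms by auto
  have T: "Tmap (B1, B2, i, j) (B1', B2', i', j') =
     (four_block_mat (kron B1 (1\<^sub>m w')) (0\<^sub>m (n * w') (w * n')) (0\<^sub>m (w * n') (n * w')) (kron (1\<^sub>m w) B1'),
      four_block_mat (kron B2 (1\<^sub>m w')) (Bt12 (B1, B2, i, j) (B1', B2', i', j')) (Bt21 (B1, B2, i, j) (B1', B2', i', j')) (kron (1\<^sub>m w) B2'),
      vstack (kron i (1\<^sub>m w')) (kron (1\<^sub>m w) i'),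
      hstack (kron j (1\<^sub>m w')) (kron (1\<^sub>m w) j'))"
    unfolding Tmap_def Let_def prod.case d ..
  show ?thesis unfolding T
    using T_stable[OF assms] T_costable[OF assms] by blast
qed

end
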